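(* Assume the standing assumptions in the context. Let $v=(v_1,v_2)$ be the bounded constrained viscosity solution on $[\underline{x},+\infty)$ of the system $$\rho v_j(x)=H(x,y_j,Dv_j(x))+\lambda_j\big(v_{\bar\jmath}(x)-v_j(x)\big),\qquad j=1,2,\ \bar\jmath=3-j.$$ Then each $v_j$ is Lipschitz continuous on $[\underline{x},+\infty)$.
   Context: Standing assumptions: $\rho>0$; $-\infty<r<\rho$; $0<y_1<y_2$; $\gamma>1$; $\underline{x}\le0$ with $\rho\underline{x}+y_j>0$ for $j=1,2$; $\lambda_1,\lambda_2\ge0$ constants. Utility $u(c)=\frac{c^{1-\gamma}}{1-\gamma}$; Hamiltonian $H(x,y_j,p)=\sup_{c\ge0}\{u(c)+(rx+y_j-c)p\}$, equal to $(rx+y_j)p+\frac{\gamma}{1-\gamma}p^{1-1/\gamma}$ for $p\ge0$ and $+\infty$ for $p<0$. Viscosity subsolution on $S\subseteq[\underline{x},\infty)$: u.s.c. pair $v$ such that whenever $\varphi$ smooth, $j\in\{1,2\}$, and $v_j-\varphi$ has a local max (relative to $[\underline{x},\infty)$) at $x_0\in S$, then $\rho v_j(x_0)\le H(x_0,y_j,D\varphi(x_0))+\lambda_j(v_{\bar\jmath}(x_0)-v_j(x_0))$. Viscosity supersolution on $S$: l.s.c. pair with the reverse inequality at local minima $x_0\in S$. A constrained viscosity solution is a continuous pair that is a viscosity supersolution on $(\underline{x},\infty)$ and a viscosity subsolution on $[\underline{x},\infty)$ (such a bounded solution is unique). *)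

theory Defs
  imports "HOL-Analysis.Analysis"
begin

definition usc_on :: "real set \<Rightarrow> (real \<Rightarrow> real) \<Rightarrow> bool" where
  "usc_on D f \<longleftrightarrow> (\<forall>x\<in>D. \<forall>a. f x < a \<longrightarrow>
      (\<exists>e>0. \<forall>z\<in>D. \<bar>z - x\<bar> < e \<longrightarrow> f z < a))"

definition lsc_on :: "real set \<Rightarrow> (real \<Rightarrow> real) \<Rightarrow> bool" where
  "lsc_on D f \<longleftrightarrow> (\<forall>x\<in>D. \<forall>a. a < f x \<longrightarrow>
      (\<exists>e>0. \<forall>z\<in>D. \<bar>z - x\<bar> < e \<longrightarrow> a < f z))"

text \<open>Hamiltonian H(x,y,p) = sup_{c\<ge>0} (u(c) + (r x + y - c) p), u(c) = c^(1-\<gamma>)/(1-\<gamma>),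
  in its closed form: finite for p \<ge> 0, +\<infinity> for p < 0.\<close>
definition Ham :: "real \<Rightarrow> real \<Rightarrow> real \<Rightarrow> real \<Rightarrow> real \<Rightarrow> ereal" where
  "Ham r \<gamma> x y p = (if 0 \<le> p
      then ereal ((r * x + y) * p + \<gamma> / (1 - \<gamma>) * p powr (1 - 1 / \<gamma>))
      else \<infinity>)"

definition loc_max_rel :: "real set \<Rightarrow> (real \<Rightarrow> real) \<Rightarrow> real \<Rightarrow> bool" where
  "loc_max_rel D g x0 \<longleftrightarrow> (\<exists>e>0. \<forall>x\<in>D. \<bar>x - x0\<bar> < e \<longrightarrow> g x \<le> g x0)"

definition loc_min_rel :: "real set \<Rightarrow> (real \<Rightarrow> real) \<Rightarrow> real \<Rightarrow> bool" where
  "loc_min_rel D g x0 \<longleftrightarrow> (\<exists>e>0. \<forall>x\<in>D. \<bar>x - x0\<bar> < e \<longrightarrow> g x0 \<le> g x)"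

text \<open>Pairs v = (v 1, v 2); index j \<in> {1,2}, conjugate index 3 - j.\<close>
definition visc_sub ::
  "real \<Rightarrow> real \<Rightarrow> real \<Rightarrow> (nat \<Rightarrow> real) \<Rightarrow> (nat \<Rightarrow> real) \<Rightarrow> real \<Rightarrow> real set
     \<Rightarrow> (nat \<Rightarrow> real \<Rightarrow> real) \<Rightarrow> bool" where
  "visc_sub \<rho> r \<gamma> y lam xl S v \<longleftrightarrow>
     (\<forall>j\<in>{1,2::nat}. usc_on {xl..} (v j)) \<and>
     (\<forall>\<phi> j x0. \<phi> C1_differentiable_on UNIV \<longrightarrow> j \<in> {1,2} \<longrightarrow> x0 \<in> S \<longrightarrow>
        loc_max_rel {xl..} (\<lambda>x. v j x - \<phi> x) x0 \<longrightarrow>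
        ereal (\<rho> * v j x0) \<le> Ham r \<gamma> x0 (y j) (deriv \<phi> x0)
                               + ereal (lam j * (v (3 - j) x0 - v j x0)))"

definition visc_super ::
  "real \<Rightarrow> real \<Rightarrow> real \<Rightarrow> (nat \<Rightarrow> real) \<Rightarrow> (nat \<Rightarrow> real) \<Rightarrow> real \<Rightarrow> real set
     \<Rightarrow> (nat \<Rightarrow> real \<Rightarrow> real) \<Rightarrow> bool" where
  "visc_super \<rho> r \<gamma> y lam xl S v \<longleftrightarrow>
     (\<forall>j\<in>{1,2::nat}. lsc_on {xl..} (v j)) \<and>
     (\<forall>\<phi> j x0. \<phi> C1_differentiable_on UNIV \<longrightarrow> j \<in> {1,2} \<longrightarrow> x0 \<in> S \<longrightarrow>
        loc_min_rel {xl..} (\<lambda>x. v j x - \<phi> x) x0 \<longrightarrow>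
        Ham r \<gamma> x0 (y j) (deriv \<phi> x0) + ereal (lam j * (v (3 - j) x0 - v j x0))
          \<le> ereal (\<rho> * v j x0))"

definition constrained_visc_sol ::
  "real \<Rightarrow> real \<Rightarrow> real \<Rightarrow> (nat \<Rightarrow> real) \<Rightarrow> (nat \<Rightarrow> real) \<Rightarrow> real
     \<Rightarrow> (nat \<Rightarrow> real \<Rightarrow> real) \<Rightarrow> bool" where
  "constrained_visc_sol \<rho> r \<gamma> y lam xl v \<longleftrightarrow>
     (\<forall>j\<in>{1,2::nat}. continuous_on {xl..} (v j)) \<and>
     visc_super \<rho> r \<gamma> y lam xl {xl<..} v \<and>
     visc_sub \<rho> r \<gamma> y lam xl {xl..} v"

end

theory Submission
  imports Defs
begin

lemma sqmax_deriv: fixes b x :: real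
  shows "((\<lambda>x. (max 0 (b - x))^2) has_real_derivative (-2 * max 0 (b - x))) (at x)"
proof (cases "x = b")
  case True
  have "((\<lambda>y. ((max 0 (b - y))^2 - (max 0 (b - b))^2) / (y - b)) \<longlongrightarrow> -2 * max 0 (b - b)) (at b)"
  proof -
    have "((\<lambda>y. - max 0 (b - y)) \<longlongrightarrow> - max 0 (b - b)) (at b)"
      by (intro tendsto_intros)
    then have "((\<lambda>y. - max 0 (b - y)) \<longlongrightarrow> -2 * max 0 (b - b)) (at b)" by simp
    moreover have ev: "\<forall>\<^sub>F y in at b. - max 0 (b - y) = ((max 0 (b - y))^2 - (max 0 (b - b))^2) / (y - b)"
      by (auto simp: eventually_at_filter power2_eq_square max_def field_simps)
    ultimately show ?thesis using iffD1[OF tendsto_cong[OF ev]] by blast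
  qed
  then show ?thesis using True by (simp add: has_field_derivative_iff)
next
  case False
  show ?thesis
  proof (cases "x < b")
    case True
    have d: "((\<lambda>x. (b - x)^2) has_real_derivative (-2 * (b - x))) (at x)"
      by (auto intro!: derivative_eq_intros)
    show ?thesis
      apply (rule has_field_derivative_transform_within_open[where S="{..<b}" and f="\<lambda>x. (b - x)^2"])
      using d True by auto
  next
    case F: False
    have d: "((\<lambda>x. 0) has_real_derivative 0) (at x)" by simp
    show ?thesis
      apply (rule has_field_derivative_transform_within_open[where S="{b<..}" and f="\<lambda>x. 0"])
      using d F False by auto
  qed
qed

lemma test_C1: fixes b P K :: real
  shows "(\<lambda>x. P * x - K * (max 0 (b - x))^2) C1_differentiable_on UNIV"
    and "deriv (\<lambda>x. P * x - K * (max 0 (b - x))^2) c = P + 2 * K * max 0 (b - c)"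
proof -
  have D: "((\<lambda>x. P * x - K * (max 0 (b - x))^2) has_real_derivative (P + 2 * K * max 0 (b - x))) (at x)" for x
  proof -
    have d1: "((\<lambda>x. P * x) has_real_derivative P) (at x)" using DERIV_cmult_Id[of P x UNIV] by simp
    have d2: "((\<lambda>x. K * (max 0 (b - x))^2) has_real_derivative K * (-2 * max 0 (b - x))) (at x)"
      by (rule DERIV_cmult[OF sqmax_deriv])
    have "((\<lambda>x. P * x - K * (max 0 (b - x))^2) has_real_derivative P - K * (-2 * max 0 (b - x))) (at x)"
      by (rule DERIV_diff[OF d1 d2])
    then show ?thesis by (simp add: algebra_simps)
  qed
  show "(\<lambda>x. P * x - K * (max 0 (b - x))^2) C1_differentiable_on UNIV"
    unfolding C1_differentiable_on_def
    apply (rule exI[where x="\<lambda>x. P + 2 * K * max 0 (b - x)"])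
    using D by (auto simp: has_real_derivative_iff_has_vector_derivative intro!: continuous_intros)
  show "deriv (\<lambda>x. P * x - K * (max 0 (b - x))^2) c = P + 2 * K * max 0 (b - c)"
    using D DERIV_imp_deriv by blast
qed

lemma lin_C1: fixes s c :: real
  shows "(\<lambda>x. s * x) C1_differentiable_on UNIV" and "deriv (\<lambda>x. s * x) c = s"
proof -
  have D: "((\<lambda>x. s * x) has_real_derivative s) (at x)" for x
    by (auto intro!: derivative_eq_intros)
  show "(\<lambda>x. s * x) C1_differentiable_on UNIV" by simp
  show "deriv (\<lambda>x. s * x) c = s" using D DERIV_imp_deriv by blast
qed


lemma interior_min:
  fixes w :: "real \<Rightarrow> real"
  assumes cont: "continuous_on {a..b} w" and m: "a \<le> m" "m \<le> b" and lt: "w m < w a" "w m < w b"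
  shows "\<exists>c. a < c \<and> c < b \<and> (\<forall>x\<in>{a..b}. w c \<le> w x)"
proof -
  obtain c where c: "c \<in> {a..b}" "\<forall>x\<in>{a..b}. w c \<le> w x"
    using continuous_attains_inf[OF compact_Icc _ cont] m by fastforce
  have "w c \<le> w m" using c m by auto
  then have "c \<noteq> a" "c \<noteq> b" using lt by auto
  then have "a < c" "c < b" using c(1) by auto
  then show ?thesis using c(2) by blast
qed

lemma interior_max:
  fixes w :: "real \<Rightarrow> real"
  assumes cont: "continuous_on {a..b} w" and m: "a \<le> m" "m \<le> b" and lt: "w m > w a" "w m > w b"
  shows "\<exists>c. a < c \<and> c < b \<and> (\<forall>x\<in>{a..b}. w x \<le> w c)"
proof -
  obtain c where c: "c \<in> {a..b}" "\<forall>x\<in>{a..b}. w x \<le> w c"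
    using continuous_attains_sup[OF compact_Icc _ cont] m by fastforce
  have "w m \<le> w c" using c m by auto
  then have "c \<noteq> a" "c \<noteq> b" using lt by auto
  then have "a < c" "c < b" using c(1) by auto
  then show ?thesis using c(2) by blast
qed

lemma loc_min_from:
  assumes "a < c" "c < b" "\<forall>x\<in>{a..b}. g c \<le> g x"
  shows "loc_min_rel D g c"
  unfolding loc_min_rel_def
  apply (rule exI[where x="min (c - a) (b - c)"])
  using assms by (auto simp: abs_less_iff)

lemma loc_max_from:
  assumes "a < c" "c < b" "\<forall>x\<in>{a..b}. g x \<le> g c"
  shows "loc_max_rel D g c"
  unfolding loc_max_rel_def
  apply (rule exI[where x="min (c - a) (b - c)"])
  using assms by (auto simp: abs_less_iff)




lemma Qbound:
  fixes \<gamma> a1 K1 :: real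
  assumes gam: "\<gamma> > 1" and a1: "a1 > 0" and K1: "K1 \<ge> 0"
  shows "\<forall>a p. a \<ge> a1 \<longrightarrow> p \<ge> max ((2 * (\<gamma> / (\<gamma> - 1)) / a1) powr \<gamma>) (2 * K1 / a1 + 1)
     \<longrightarrow> a * p + \<gamma> / (1 - \<gamma>) * p powr (1 - 1 / \<gamma>) > K1"
proof (intro allI impI)
  fix a p :: real
  assume a: "a \<ge> a1" and p: "p \<ge> max ((2 * (\<gamma> / (\<gamma> - 1)) / a1) powr \<gamma>) (2 * K1 / a1 + 1)"
  define C where "C = \<gamma> / (\<gamma> - 1)"
  have C: "C > 0" unfolding C_def using gam by simp
  have p1: "p \<ge> 2 * K1 / a1 + 1" using p by simp
  have p2: "p \<ge> (2 * C / a1) powr \<gamma>" using p unfolding C_def by simp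
  have K1a: "2 * K1 / a1 \<ge> 0" using K1 a1 by simp
  have pp: "p > 0" using p1 K1a by linarith
  have "p powr (1 / \<gamma>) \<ge> ((2 * C / a1) powr \<gamma>) powr (1 / \<gamma>)"
    using p2 gam by (intro powr_mono2) auto
  also have "((2 * C / a1) powr \<gamma>) powr (1 / \<gamma>) = 2 * C / a1"
    using gam C a1 by (simp add: powr_powr)
  finally have pg: "p powr (1 / \<gamma>) \<ge> 2 * C / a1" .
  have "p powr (1 - 1 / \<gamma>) = p / p powr (1 / \<gamma>)"
    using pp by (simp add: powr_diff)
  also have "\<dots> \<le> p / (2 * C / a1)"
    using pg pp C a1 by (intro divide_left_mono) auto
  also have "\<dots> = p * a1 / (2 * C)" by simp
  finally have pt: "p powr (1 - 1 / \<gamma>) \<le> p * a1 / (2 * C)" .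
  have g: "\<gamma> / (1 - \<gamma>) = - C" unfolding C_def using gam by (simp add: field_simps)
  have "C * p powr (1 - 1 / \<gamma>) \<le> C * (p * a1 / (2 * C))" using pt C by (intro mult_left_mono) auto
  also have "\<dots> = a1 * p / 2" using C by simp
  finally have t1: "C * p powr (1 - 1 / \<gamma>) \<le> a1 * p / 2" .
  have t2: "a * p \<ge> a1 * p" using a pp by (intro mult_right_mono) auto
  have t3: "a1 * p \<ge> a1 * (2 * K1 / a1 + 1)" using p1 a1 by (intro mult_left_mono) auto
  have t4: "a1 * (2 * K1 / a1 + 1) = 2 * K1 + a1" using a1 by (simp add: field_simps)
  show "a * p + \<gamma> / (1 - \<gamma>) * p powr (1 - 1 / \<gamma>) > K1"
    unfolding g using t1 t2 t3 t4 a1 by linarith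
qed

lemma Pbound:
  fixes \<gamma> T :: real
  assumes gam: "\<gamma> > 1" and T: "T > 0"
  shows "(T powr (\<gamma> / (\<gamma> - 1))) powr (1 - 1 / \<gamma>) = T"
proof -
  have h: "\<gamma> / (\<gamma> - 1) * (1 - 1 / \<gamma>) = 1" using gam by (simp add: field_simps)
  have "(T powr (\<gamma> / (\<gamma> - 1))) powr (1 - 1 / \<gamma>) = T powr (\<gamma> / (\<gamma> - 1) * (1 - 1 / \<gamma>))"
    by (rule powr_powr)
  also have "\<dots> = T" unfolding h using T by simp
  finally show ?thesis .
qed


context
  fixes \<rho> r \<gamma> xl M :: real and y lam :: "nat \<Rightarrow> real" and v :: "nat \<Rightarrow> real \<Rightarrow> real"
  assumes sol: "constrained_visc_sol \<rho> r \<gamma> y lam xl v"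
    and bnd: "\<forall>j\<in>{1,2::nat}. \<forall>x\<in>{xl..}. \<bar>v j x\<bar> \<le> M"
    and rho: "\<rho> > 0" and lam1: "lam 1 \<ge> 0" and lam2: "lam 2 \<ge> 0" and gam: "\<gamma> > 1"
begin

lemma bnds:
  assumes j: "j \<in> {1,2::nat}" and c: "xl \<le> c"
  shows "\<bar>v j c\<bar> \<le> M" "\<bar>v (3 - j) c\<bar> \<le> M" "lam j \<ge> 0"
    "lam j * (v (3 - j) c - v j c) \<ge> - 2 * lam j * M"
proof -
  have j3: "3 - j \<in> {1,2}" using j by auto
  show A: "\<bar>v j c\<bar> \<le> M" using bnd j c by auto
  show B: "\<bar>v (3 - j) c\<bar> \<le> M" using bnd j3 c by auto
  show L: "lam j \<ge> 0" using j lam1 lam2 by auto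
  have "v (3 - j) c - v j c \<ge> - 2 * M" using A B by linarith
  then have "lam j * (v (3 - j) c - v j c) \<ge> lam j * (- 2 * M)"
    using L mult_left_mono by blast
  then show "lam j * (v (3 - j) c - v j c) \<ge> - 2 * lam j * M" by simp
qed

lemma super_ineq:
  assumes j: "j \<in> {1,2::nat}" and phi: "\<phi> C1_differentiable_on UNIV" and c: "xl < c"
    and mn: "loc_min_rel {xl..} (\<lambda>x. v j x - \<phi> x) c"
  shows "0 \<le> deriv \<phi> c \<and>
    (r * c + y j) * deriv \<phi> c + \<gamma> / (1 - \<gamma>) * deriv \<phi> c powr (1 - 1 / \<gamma>) \<le> (\<rho> + 2 * lam j) * M"
proof -
  have sup: "visc_super \<rho> r \<gamma> y lam xl {xl<..} v" using sol unfolding constrained_visc_sol_def by blast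
  have E: "Ham r \<gamma> c (y j) (deriv \<phi> c) + ereal (lam j * (v (3 - j) c - v j c)) \<le> ereal (\<rho> * v j c)"
    using sup phi j c mn unfolding visc_super_def by auto
  have p: "0 \<le> deriv \<phi> c"
  proof (rule ccontr)
    assume "\<not> 0 \<le> deriv \<phi> c"
    then have "Ham r \<gamma> c (y j) (deriv \<phi> c) = \<infinity>" by (simp add: Ham_def)
    then show False using E by simp
  qed
  then have E2: "(r * c + y j) * deriv \<phi> c + \<gamma> / (1 - \<gamma>) * deriv \<phi> c powr (1 - 1 / \<gamma>)
      + lam j * (v (3 - j) c - v j c) \<le> \<rho> * v j c"
    using E by (simp add: Ham_def)
  have b: "\<bar>v j c\<bar> \<le> M" "lam j * (v (3 - j) c - v j c) \<ge> - 2 * lam j * M"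
    using bnds[OF j] c by auto
  have "\<rho> * v j c \<le> \<rho> * M" using b(1) rho by (intro mult_left_mono) auto
  then show ?thesis using p E2 b(2) by (simp add: algebra_simps)
qed

lemma sub_ineq:
  assumes j: "j \<in> {1,2::nat}" and phi: "\<phi> C1_differentiable_on UNIV" and c: "xl \<le> c"
    and mx: "loc_max_rel {xl..} (\<lambda>x. v j x - \<phi> x) c" and p: "0 \<le> deriv \<phi> c"
  shows "(r * c + y j) * deriv \<phi> c + \<gamma> / (1 - \<gamma>) * deriv \<phi> c powr (1 - 1 / \<gamma>) \<ge> - (\<rho> + 2 * lam j) * M"
proof -
  have sub: "visc_sub \<rho> r \<gamma> y lam xl {xl..} v" using sol unfolding constrained_visc_sol_def by blast
  have E: "ereal (\<rho> * v j c) \<le> Ham r \<gamma> c (y j) (deriv \<phi> c) + ereal (lam j * (v (3 - j) c - v j c))"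
    using sub phi j c mx unfolding visc_sub_def by auto
  then have E2: "\<rho> * v j c \<le> (r * c + y j) * deriv \<phi> c + \<gamma> / (1 - \<gamma>) * deriv \<phi> c powr (1 - 1 / \<gamma>)
      + lam j * (v (3 - j) c - v j c)"
    using p by (simp add: Ham_def)
  have b: "\<bar>v j c\<bar> \<le> M" "\<bar>v (3 - j) c\<bar> \<le> M" "lam j \<ge> 0" using bnds[OF j c] by auto
  have "\<rho> * v j c \<ge> \<rho> * (- M)" using b(1) rho by (intro mult_left_mono) auto
  moreover have "lam j * (v (3 - j) c - v j c) \<le> lam j * (2 * M)"
    using b by (intro mult_left_mono) auto
  ultimately show ?thesis using E2 by (simp add: algebra_simps)
qed


lemma mono_v:
  assumes j: "j \<in> {1,2::nat}" and x: "xl \<le> x1" "x1 < x2"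
  shows "v j x1 \<le> v j x2"
proof (rule ccontr)
  assume "\<not> ?thesis"
  then have lt: "v j x2 < v j x1" by simp
  define s where "s = (v j x1 - v j x2) / (2 * (x2 - x1))"
  have s: "s > 0" using lt x unfolding s_def by (simp add: field_simps)
  have s2: "2 * s * (x2 - x1) = v j x1 - v j x2" using x unfolding s_def by (simp add: field_simps)
  have M0: "M \<ge> 0" using bnds(1)[OF j, of x1] x by auto
  define X where "X = x2 + 2 * M / s + 1"
  have sX: "s * X = s * x2 + 2 * M + s" unfolding X_def using s by (simp add: field_simps)
  have x2X: "x2 < X" unfolding X_def using M0 s by (simp add: field_simps)
  have contv: "continuous_on {xl..} (v j)" using sol j unfolding constrained_visc_sol_def by auto
  have cont: "continuous_on {x1..X} (\<lambda>x. v j x - (- s) * x)"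
    by (intro continuous_intros continuous_on_subset[OF contv]) (use x in auto)
  have b2: "\<bar>v j x2\<bar> \<le> M" "\<bar>v j X\<bar> \<le> M" using bnds(1)[OF j] x x2X by auto
  have sx: "s * x1 < s * x2" using s x by simp
  have w1: "v j x2 - (- s) * x2 < v j x1 - (- s) * x1" using s2 sx by (simp add: algebra_simps)
  have w2: "v j x2 - (- s) * x2 < v j X - (- s) * X" using b2 sX s by (simp add: algebra_simps)
  obtain c where c: "x1 < c" "c < X" "\<forall>z\<in>{x1..X}. v j c - (- s) * c \<le> v j z - (- s) * z"
    using interior_min[OF cont, of x2] w1 w2 x x2X by auto
  have mn: "loc_min_rel {xl..} (\<lambda>z. v j z - (\<lambda>x. (- s) * x) z) c"
    using loc_min_from[OF c(1) c(2), of "\<lambda>z. v j z - (- s) * z"] c(3) by auto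
  have "0 \<le> deriv (\<lambda>x. (- s) * x) c"
    using super_ineq[OF j lin_C1(1) _ mn] c x by auto
  then show False using s lin_C1(2)[of "- s" c] by simp
qed

lemma upA:
  assumes j: "j \<in> {1,2::nat}" and a1: "a1 > 0" and P: "P > 0"
    and Q: "\<forall>a p. a \<ge> a1 \<longrightarrow> p \<ge> P \<longrightarrow> a * p + \<gamma> / (1 - \<gamma>) * p powr (1 - 1 / \<gamma>) > (\<rho> + 2 * lam j) * M"
    and x: "xl < x1" "x1 < x2"
    and reg: "\<forall>c. xl < c \<longrightarrow> c < x2 \<longrightarrow> r * c + y j \<ge> a1"
  shows "v j x2 - v j x1 \<le> P * (x2 - x1)"
proof (rule ccontr)
  assume "\<not> ?thesis"
  then have neg: "v j x2 - v j x1 > P * (x2 - x1)" by simp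
  have M0: "M \<ge> 0" using bnds(1)[OF j, of x1] x by auto
  define K where "K = 2 * M / (x1 - xl)^2 + 1"
  have K0: "K > 0" unfolding K_def using M0 x by (simp add: add_nonneg_pos)
  have KK: "K * (x1 - xl)^2 = 2 * M + (x1 - xl)^2" unfolding K_def using x by (simp add: field_simps)
  have contv: "continuous_on {xl..} (v j)" using sol j unfolding constrained_visc_sol_def by auto
  let ?w = "\<lambda>z. v j z - (P * z - K * (max 0 (x1 - z))^2)"
  have cont: "continuous_on {xl..x2} ?w"
    by (intro continuous_intros continuous_on_subset[OF contv]) auto
  have b: "\<bar>v j xl\<bar> \<le> M" "\<bar>v j x1\<bar> \<le> M" using bnds(1)[OF j] x by auto
  have wx1: "?w x1 = v j x1 - P * x1" by simp
  have wx2: "?w x2 = v j x2 - P * x2" using x by simp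
  have wxl: "?w xl = v j xl - P * xl + K * (x1 - xl)^2" using x by simp
  have Pl: "P * xl \<le> P * x1" using P x by simp
  have "(x1 - xl)^2 > 0" using x by simp
  then have l1: "?w x1 < ?w xl" using wx1 wxl KK b Pl by linarith
  have neg': "v j x1 - P * x1 < v j x2 - P * x2" using neg by (simp add: algebra_simps)
  have m0: "max 0 (x1 - x2) = (0::real)" using x by simp
  have l2: "?w x1 < ?w x2" using neg' by (simp add: m0)
  obtain c where c: "xl < c" "c < x2" "\<forall>z\<in>{xl..x2}. ?w c \<le> ?w z"
    using interior_min[OF cont, of x1] l1 l2 x by auto
  have mn: "loc_min_rel {xl..} (\<lambda>z. v j z - (\<lambda>x. P * x - K * (max 0 (x1 - x))^2) z) c"
    using loc_min_from[OF c(1) c(2), of ?w] c(3) by auto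
  have I: "(r * c + y j) * deriv (\<lambda>x. P * x - K * (max 0 (x1 - x))^2) c
     + \<gamma> / (1 - \<gamma>) * deriv (\<lambda>x. P * x - K * (max 0 (x1 - x))^2) c powr (1 - 1 / \<gamma>) \<le> (\<rho> + 2 * lam j) * M"
    using super_ineq[OF j test_C1(1) c(1) mn] by blast
  have dp: "deriv (\<lambda>x. P * x - K * (max 0 (x1 - x))^2) c \<ge> P"
    unfolding test_C1(2) using K0 by simp
  have "r * c + y j \<ge> a1" using reg c by auto
  then have Q2: "\<forall>p. p \<ge> P \<longrightarrow> (r * c + y j) * p + \<gamma> / (1 - \<gamma>) * p powr (1 - 1 / \<gamma>) > (\<rho> + 2 * lam j) * M"
    using Q by blast
  have "(r * c + y j) * deriv (\<lambda>x. P * x - K * (max 0 (x1 - x))^2) c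
     + \<gamma> / (1 - \<gamma>) * deriv (\<lambda>x. P * x - K * (max 0 (x1 - x))^2) c powr (1 - 1 / \<gamma>) > (\<rho> + 2 * lam j) * M"
    using spec[OF Q2, of "deriv (\<lambda>x. P * x - K * (max 0 (x1 - x))^2) c"] dp by blast
  then show False using I by linarith
qed

lemma upA0:
  assumes j: "j \<in> {1,2::nat}" and a1: "a1 > 0" and P: "P > 0"
    and Q: "\<forall>a p. a \<ge> a1 \<longrightarrow> p \<ge> P \<longrightarrow> a * p + \<gamma> / (1 - \<gamma>) * p powr (1 - 1 / \<gamma>) > (\<rho> + 2 * lam j) * M"
    and x: "xl \<le> x1" "x1 < x2"
    and reg: "\<forall>c. xl < c \<longrightarrow> c < x2 \<longrightarrow> r * c + y j \<ge> a1"
  shows "v j x2 - v j x1 \<le> P * (x2 - x1)"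
proof (cases "xl < x1")
  case True
  then show ?thesis using upA[OF j a1 P Q True x(2) reg] by blast
next
  case False
  then have e: "x1 = xl" using x by simp
  show ?thesis
  proof (rule ccontr)
    assume "\<not> ?thesis"
    then have d0: "v j x2 - v j xl - P * (x2 - xl) > 0" using e by simp
    have contv: "continuous_on {xl..} (v j)" using sol j unfolding constrained_visc_sol_def by auto
    then obtain d where d: "d > 0" "\<forall>x'\<in>{xl..}. dist x' xl < d \<longrightarrow>
        dist (v j x') (v j xl) < v j x2 - v j xl - P * (x2 - xl)"
      using d0 unfolding continuous_on_iff by (meson atLeast_iff order_refl)
    define t where "t = xl + min (d / 2) ((x2 - xl) / 2)"
    have mn1: "min (d / 2) ((x2 - xl) / 2) \<le> (x2 - xl) / 2" "min (d / 2) ((x2 - xl) / 2) \<le> d / 2"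
      "min (d / 2) ((x2 - xl) / 2) > 0" using d x e unfolding min_def by auto
    have t: "xl < t" "t < x2" "dist t xl < d" using mn1 d x e unfolding t_def by (auto simp: dist_real_def)
    have "dist (v j t) (v j xl) < v j x2 - v j xl - P * (x2 - xl)" using d t by auto
    then have A: "v j t - v j xl < v j x2 - v j xl - P * (x2 - xl)" by (simp add: dist_real_def)
    have B: "v j x2 - v j t \<le> P * (x2 - t)" using upA[OF j a1 P Q t(1) t(2) reg] by blast
    have "P * (x2 - t) \<le> P * (x2 - xl)" using P t by simp
    then show False using A B by linarith
  qed
qed

lemma upB:
  assumes j: "j \<in> {1,2::nat}" and P: "P > 0"
    and N: "a1 * P + \<gamma> / (1 - \<gamma>) * P powr (1 - 1 / \<gamma>) < - (\<rho> + 2 * lam j) * M"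
    and x: "xl \<le> x1" "x1 < x2"
    and reg: "\<forall>c. x1 < c \<longrightarrow> r * c + y j \<le> a1"
  shows "v j x2 - v j x1 \<le> P * (x2 - x1)"
proof (rule ccontr)
  assume "\<not> ?thesis"
  then have neg: "v j x2 - v j x1 > P * (x2 - x1)" by simp
  have M0: "M \<ge> 0" using bnds(1)[OF j, of x1] x by auto
  define X where "X = x2 + 2 * M / P + 1"
  have PX: "P * X = P * x2 + 2 * M + P" unfolding X_def using P by (simp add: field_simps)
  have x2X: "x2 < X" unfolding X_def using M0 P by (simp add: field_simps)
  have contv: "continuous_on {xl..} (v j)" using sol j unfolding constrained_visc_sol_def by auto
  have cont: "continuous_on {x1..X} (\<lambda>x. v j x - P * x)"
    by (intro continuous_intros continuous_on_subset[OF contv]) (use x in auto)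
  have b: "\<bar>v j x1\<bar> \<le> M" "\<bar>v j X\<bar> \<le> M" using bnds(1)[OF j] x x2X by auto
  have Pl: "P * x1 \<le> P * x2" using P x by simp
  have w1: "v j x2 - P * x2 > v j x1 - P * x1" using neg by (simp add: algebra_simps)
  have w2: "v j x2 - P * x2 > v j X - P * X" using w1 b PX Pl P by linarith
  obtain c where c: "x1 < c" "c < X" "\<forall>z\<in>{x1..X}. v j z - P * z \<le> v j c - P * c"
    using interior_max[OF cont, of x2] w1 w2 x x2X by auto
  have mx: "loc_max_rel {xl..} (\<lambda>z. v j z - (\<lambda>x. P * x) z) c"
    using loc_max_from[OF c(1) c(2), of "\<lambda>z. v j z - P * z"] c(3) by auto
  have dP: "deriv (\<lambda>x. P * x) c = P" by (rule lin_C1(2))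
  have I: "(r * c + y j) * P + \<gamma> / (1 - \<gamma>) * P powr (1 - 1 / \<gamma>) \<ge> - (\<rho> + 2 * lam j) * M"
    using sub_ineq[OF j lin_C1(1), of c] mx c x P dP by auto
  have "r * c + y j \<le> a1" using reg c by auto
  then have "(r * c + y j) * P \<le> a1 * P" using P by (simp add: mult_right_mono)
  then show False using I N by linarith
qed


lemma lip_j:
  assumes j: "j \<in> {1,2::nat}" and rr: "r < \<rho>" and xl0: "xl \<le> 0" and yj: "\<rho> * xl + y j > 0"
  shows "\<exists>L. L-lipschitz_on {xl..} (v j)"
proof -
  define K1 where "K1 = (\<rho> + 2 * lam j) * M"
  have M0: "M \<ge> 0" using bnds(1)[OF j, of xl] by auto
  have lj: "lam j \<ge> 0" using bnds(3)[OF j, of xl] by auto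
  have K1: "K1 \<ge> 0" unfolding K1_def using M0 lj rho by simp
  define C where "C = \<gamma> / (\<gamma> - 1)"
  have C: "C > 0" unfolding C_def using gam by simp
  have g: "\<gamma> / (1 - \<gamma>) = - C" unfolding C_def using gam by (simp add: field_simps)
  define a0 where "a0 = r * xl + y j"
  have "(r - \<rho>) * xl \<ge> 0" using rr xl0 by (intro mult_nonpos_nonpos) auto
  then have a0: "a0 > 0" unfolding a0_def using yj by (simp add: algebra_simps)
  define T where "T = 2 * (K1 + 1) / C"
  have T: "T > 0" unfolding T_def using K1 C by simp
  define P1 where "P1 = T powr (\<gamma> / (\<gamma> - 1))"
  have P1: "P1 > 0" unfolding P1_def using T by simp
  have P1T: "P1 powr (1 - 1 / \<gamma>) = T" unfolding P1_def by (rule Pbound[OF gam T])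
  define a1 where "a1 = min a0 ((K1 + 1) / P1)"
  have a1: "a1 > 0" unfolding a1_def using a0 K1 P1 by simp
  have "a1 * P1 \<le> ((K1 + 1) / P1) * P1" unfolding a1_def using P1 by (intro mult_right_mono) auto
  then have a1P: "a1 * P1 \<le> K1 + 1" using P1 by simp
  have CT: "C * T = 2 * (K1 + 1)" unfolding T_def using C by simp
  have NB0: "\<gamma> / (1 - \<gamma>) * P1 powr (1 - 1 / \<gamma>) = - (2 * (K1 + 1))"
    unfolding g P1T using CT by simp
  have NB1: "a1 * P1 + \<gamma> / (1 - \<gamma>) * P1 powr (1 - 1 / \<gamma>) < - K1"
  proof -
    have "a1 * P1 + - (2 * (K1 + 1)) \<le> (K1 + 1) + - (2 * (K1 + 1))" using a1P by (rule add_right_mono)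
    also have "\<dots> < - K1" by simp
    finally show ?thesis unfolding NB0 .
  qed
  have NB: "a1 * P1 + \<gamma> / (1 - \<gamma>) * P1 powr (1 - 1 / \<gamma>) < - (\<rho> + 2 * lam j) * M"
  proof -
    have e: "- K1 = - (\<rho> + 2 * lam j) * M" unfolding K1_def by (simp only: minus_mult_left)
    show ?thesis using NB1 unfolding e .
  qed
  define P2 where "P2 = max ((2 * (\<gamma> / (\<gamma> - 1)) / a1) powr \<gamma>) (2 * K1 / a1 + 1)"
  have P2: "P2 > 0" unfolding P2_def using K1 a1 by (simp add: less_max_iff_disj add_nonneg_pos)
  have QA: "\<forall>a p. a \<ge> a1 \<longrightarrow> p \<ge> P2 \<longrightarrow> a * p + \<gamma> / (1 - \<gamma>) * p powr (1 - 1 / \<gamma>) > (\<rho> + 2 * lam j) * M"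
  proof -
    have QA0: "\<forall>a p. a \<ge> a1 \<longrightarrow> p \<ge> P2 \<longrightarrow> a * p + \<gamma> / (1 - \<gamma>) * p powr (1 - 1 / \<gamma>) > K1"
      using Qbound[OF gam a1 K1] unfolding P2_def .
    then show ?thesis unfolding K1_def .
  qed
  define L where "L = max P1 P2"
  have L: "L \<ge> 0" unfolding L_def using P1 by simp
  have upA': "v j x2 - v j x1 \<le> L * (x2 - x1)"
    if "xl \<le> x1" "x1 < x2" "\<forall>c. xl < c \<longrightarrow> c < x2 \<longrightarrow> r * c + y j \<ge> a1" for x1 x2
  proof -
    have "v j x2 - v j x1 \<le> P2 * (x2 - x1)" using upA0[OF j a1 P2 QA that] .
    moreover have "P2 * (x2 - x1) \<le> L * (x2 - x1)" unfolding L_def using that by (intro mult_right_mono) auto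
    ultimately show ?thesis by linarith
  qed
  have upB': "v j x2 - v j x1 \<le> L * (x2 - x1)"
    if "xl \<le> x1" "x1 < x2" "\<forall>c. x1 < c \<longrightarrow> r * c + y j \<le> a1" for x1 x2
  proof -
    have "v j x2 - v j x1 \<le> P1 * (x2 - x1)" using upB[OF j P1 NB that] .
    moreover have "P1 * (x2 - x1) \<le> L * (x2 - x1)" unfolding L_def using that by (intro mult_right_mono) auto
    ultimately show ?thesis by linarith
  qed
  have up: "v j x2 - v j x1 \<le> L * (x2 - x1)" if x: "xl \<le> x1" "x1 < x2" for x1 x2
  proof (cases "r \<ge> 0")
    case True
    have "\<forall>c. xl < c \<longrightarrow> c < x2 \<longrightarrow> r * c + y j \<ge> a1"
    proof (intro allI impI)
      fix c assume "xl < c" "c < x2"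
      then have "r * xl \<le> r * c" using True by (intro mult_left_mono) auto
      then show "r * c + y j \<ge> a1" using a0_def unfolding a1_def by linarith
    qed
    then show ?thesis using upA'[OF x(1) x(2)] by blast
  next
    case False
    then have r0: "r < 0" by simp
    define xa where "xa = (a1 - y j) / r"
    have rxa: "r * xa = a1 - y j" unfolding xa_def using r0 by simp
    have left: "r * c + y j \<ge> a1" if "c \<le> xa" for c
    proof -
      have "r * xa \<le> r * c" using that r0 by (intro mult_left_mono_neg) auto
      then show ?thesis using rxa by linarith
    qed
    have right: "r * c + y j \<le> a1" if "xa \<le> c" for c
    proof -
      have "r * c \<le> r * xa" using that r0 by (intro mult_left_mono_neg) auto
      then show ?thesis using rxa by linarith
    qed
    consider "x2 \<le> xa" | "xa \<le> x1" | "x1 < xa" "xa < x2" by linarith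
    then show ?thesis
    proof cases
      case 1
      have "\<forall>c. xl < c \<longrightarrow> c < x2 \<longrightarrow> r * c + y j \<ge> a1"
        using left 1 by auto
      then show ?thesis using upA'[OF x(1) x(2)] by blast
    next
      case 2
      have "\<forall>c. x1 < c \<longrightarrow> r * c + y j \<le> a1"
        using right 2 by auto
      then show ?thesis using upB'[OF x(1) x(2)] by blast
    next
      case 3
      have "\<forall>c. xl < c \<longrightarrow> c < xa \<longrightarrow> r * c + y j \<ge> a1"
        using left by auto
      then have A: "v j xa - v j x1 \<le> L * (xa - x1)" using upA'[OF x(1) 3(1)] by blast
      have "\<forall>c. xa < c \<longrightarrow> r * c + y j \<le> a1"
        using right by auto
      moreover have "xl \<le> xa" using x 3 by linarith
      ultimately have B: "v j x2 - v j xa \<le> L * (x2 - xa)" using upB'[of xa x2] 3(2) by blast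
      have "L * (xa - x1) + L * (x2 - xa) = L * (x2 - x1)" by (simp add: algebra_simps)
      then show ?thesis using A B by linarith
    qed
  qed
  have "L-lipschitz_on {xl..} (v j)"
    unfolding lipschitz_on_def
  proof (intro conjI L ballI)
    fix x z assume xz: "x \<in> {xl..}" "z \<in> {xl..}"
    have gen: "\<bar>v j b - v j a\<bar> \<le> L * \<bar>b - a\<bar>" if "xl \<le> a" "a \<le> b" for a b
    proof (cases "a = b")
      case True then show ?thesis by simp
    next
      case False
      then have ab: "a < b" using that by simp
      have "v j a \<le> v j b" using mono_v[OF j that(1) ab] .
      moreover have "v j b - v j a \<le> L * (b - a)" using up[OF that(1) ab] .
      ultimately show ?thesis using ab by simp
    qed
    show "dist (v j x) (v j z) \<le> L * dist x z"
    proof (cases "x \<le> z")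
      case True
      then show ?thesis using gen[of x z] xz by (simp add: dist_real_def abs_minus_commute)
    next
      case False
      then show ?thesis using gen[of z x] xz by (simp add: dist_real_def)
    qed
  qed
  then show ?thesis by blast
qed

end

theorem mainTheorem6:
  fixes \<rho> r \<gamma> xl :: real and y lam :: "nat \<Rightarrow> real" and v :: "nat \<Rightarrow> real \<Rightarrow> real"
  assumes "\<rho> > 0" and "r < \<rho>"
    and "0 < y 1" and "y 1 < y 2"
    and "\<gamma> > 1"
    and "xl \<le> 0" and "\<rho> * xl + y 1 > 0" and "\<rho> * xl + y 2 > 0"
    and "lam 1 \<ge> 0" and "lam 2 \<ge> 0"
    and "constrained_visc_sol \<rho> r \<gamma> y lam xl v"
    and "\<exists>M. \<forall>j\<in>{1,2::nat}. \<forall>x\<in>{xl..}. \<bar>v j x\<bar> \<le> M"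
  shows "\<forall>j\<in>{1,2::nat}. \<exists>L. L-lipschitz_on {xl..} (v j)"
proof
  fix j :: nat assume j: "j \<in> {1,2}"
  obtain M where M: "\<forall>j\<in>{1,2::nat}. \<forall>x\<in>{xl..}. \<bar>v j x\<bar> \<le> M" using assms(12) by blast
  have yj: "\<rho> * xl + y j > 0" using j assms(7,8) by auto
  show "\<exists>L. L-lipschitz_on {xl..} (v j)"
    using lip_j[OF assms(11) M assms(1) assms(9) assms(10) assms(5) j assms(2) assms(6) yj] .
qed

end
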